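(* Let $2\le d\le m$ and $\delta>0$. Let $A$ be a deterministic priority mechanism that processes elementary bids and is truthful without money and with verification for CAs with known multi-minded bidders. Then there is an instance with $m$ goods in which all demanded sets have cardinality at most $d$ on which the social welfare of $A$ is less than $\mathrm{OPT}/((1-\delta)d)$; i.e., the approximation ratio of $A$ is greater than $(1-\delta)d$.
   Context: Combinatorial auction with a set $\mathsf U$ of $m$ goods (single copy each) and bidders; bidder $i$ has a public collection $\mathcal S_i$ of nonempty subsets of $\mathsf U$ (known bidders) and a private valuation $v_i:\mathcal S_i\to\mathbb R_{\ge0}$. Truthfulness without money and with verification (known bidders) means: for all $i$, $\mathbf b_{-i}$, true $v_i$ and declarations $b_i$ with $b_i(A_i(b_i,\mathbf b_{-i}))\le v_i(A_i(b_i,\mathbf b_{-i}))$, $v_i(A_i(v_i,\mathbf b_{-i}))\ge v_i(A_i(b_i,\mathbf b_{-i}))$. Priority mechanism processing elementary bids: the input is a finite set $I$ of elementary bids $(i,S,v)$ (bidder $i$ declares value $v$ for demanded set $S$), drawn from the class $\mathcal I$ of all possible elementary bids. The mechanism proceeds in rounds; in each round, without looking at the unprocessed items, it chooses a total order on $\mathcal I$ (which may depend on the items processed and decisions taken so far), receives the first unprocessed item of $I$ in this order, and makes an irrevocable accept/reject decision on it; accepting $(i,S,v)$ allocates $S$ to $i$ and yields welfare $v$. The output must be a feasible allocation (each bidder gets at most one set, sets pairwise disjoint). $\mathrm{OPT}$ is the maximum welfare of a feasible allocation. *)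

theory Defs
  imports Complex_Main
begin

text \<open>Goods are natural numbers; the universe of m goods is {0..<m}. Bidders are natural numbers.
An elementary bid (i, S, v): bidder i declares value v for demanded set S.\<close>

type_synonym ebid = "nat \<times> nat set \<times> real"

text \<open>History of a priority mechanism: the items processed so far, with the accept(True)/reject(False)
decision taken on each.\<close>
type_synonym hist = "(ebid \<times> bool) list"

text \<open>A deterministic (adaptive) priority mechanism is given by
  ord h : the total order on the class of all elementary bids chosen after history h,
  dec h x : the irrevocable accept/reject decision on item x after history h.\<close>

fun prun :: "(hist \<Rightarrow> ebid rel) \<Rightarrow> (hist \<Rightarrow> ebid \<Rightarrow> bool) \<Rightarrow> ebid set \<Rightarrow> nat \<Rightarrow> hist" where
  "prun ord dec I 0 = []"
| "prun ord dec I (Suc n) =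
     (let h = prun ord dec I n; R = I - fst ` set h in
      if R = {} then h
      else (let x = (THE x. x \<in> R \<and> (\<forall>y\<in>R. (x, y) \<in> ord h)) in h @ [(x, dec h x)]))"

definition pout :: "(hist \<Rightarrow> ebid rel) \<Rightarrow> (hist \<Rightarrow> ebid \<Rightarrow> bool) \<Rightarrow> ebid set \<Rightarrow> ebid set" where
  "pout ord dec I = {x. (x, True) \<in> set (prun ord dec I (card I))}"

definition feasible :: "ebid set \<Rightarrow> bool" where
  "feasible X \<longleftrightarrow> (\<forall>(i, S, w) \<in> X. \<forall>(i', S', w') \<in> X.
      (i, S, w) \<noteq> (i', S', w') \<longrightarrow> i \<noteq> i' \<and> S \<inter> S' = {})"

definition welfare :: "ebid set \<Rightarrow> real" where
  "welfare X = (\<Sum>x\<in>X. snd (snd x))"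

text \<open>An instance: public collections C i (empty for non-participating bidders) and
valuations v i (only relevant on C i). Valid instance over the universe {0..<m}.\<close>
definition inst_ok :: "nat \<Rightarrow> (nat \<Rightarrow> nat set set) \<Rightarrow> (nat \<Rightarrow> nat set \<Rightarrow> real) \<Rightarrow> bool" where
  "inst_ok m C v \<longleftrightarrow> finite {i. C i \<noteq> {}} \<and>
     (\<forall>i. \<forall>S\<in>C i. S \<noteq> {} \<and> S \<subseteq> {0..<m} \<and> 0 \<le> v i S)"

definition bids :: "(nat \<Rightarrow> nat set set) \<Rightarrow> (nat \<Rightarrow> nat set \<Rightarrow> real) \<Rightarrow> ebid set" where
  "bids C v = {(i, S, v i S) | i S. S \<in> C i}"

definition OPT :: "(nat \<Rightarrow> nat set set) \<Rightarrow> (nat \<Rightarrow> nat set \<Rightarrow> real) \<Rightarrow> real" where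
  "OPT C v = Max (welfare ` {X. X \<subseteq> bids C v \<and> feasible X})"

definition alloc :: "ebid set \<Rightarrow> nat \<Rightarrow> nat set" where
  "alloc X i = (if \<exists>S w. (i, S, w) \<in> X then (THE S. \<exists>w. (i, S, w) \<in> X) else {})"

definition val :: "(nat set \<Rightarrow> real) \<Rightarrow> nat set \<Rightarrow> real" where
  "val f S = (if S = {} then 0 else f S)"

definition priority_mech :: "nat \<Rightarrow> (hist \<Rightarrow> ebid rel) \<Rightarrow> (hist \<Rightarrow> ebid \<Rightarrow> bool) \<Rightarrow> bool" where
  "priority_mech m ord dec \<longleftrightarrow> (\<forall>h. linear_order (ord h)) \<and>
     (\<forall>C v. inst_ok m C v \<longrightarrow> feasible (pout ord dec (bids C v)))"

text \<open>Truthfulness without money and with verification (known bidders): for declared profile b,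
bidder i with true valuation t, if b i does not overstate the value of the set i receives
under b, then truthful reporting is at least as good.\<close>
definition truthful_verif :: "nat \<Rightarrow> (hist \<Rightarrow> ebid rel) \<Rightarrow> (hist \<Rightarrow> ebid \<Rightarrow> bool) \<Rightarrow> bool" where
  "truthful_verif m ord dec \<longleftrightarrow>
     (\<forall>C b i t. inst_ok m C b \<longrightarrow> inst_ok m C (b(i := t)) \<longrightarrow>
        (let Ab = alloc (pout ord dec (bids C b)) i;
             At = alloc (pout ord dec (bids C (b(i := t)))) i
         in val (b i) Ab \<le> val t Ab \<longrightarrow> val t Ab \<le> val t At))"

end

theory Submission
  imports Defs
begin

lemma lin_refl: "linear_order r \<Longrightarrow> (x,x) \<in> r"
  by (auto simp: linear_order_on_def partial_order_on_def preorder_on_def refl_on_def)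
lemma lin_trans: "linear_order r \<Longrightarrow> (x,y) \<in> r \<Longrightarrow> (y,z) \<in> r \<Longrightarrow> (x,z) \<in> r"
  unfolding linear_order_on_def partial_order_on_def preorder_on_def trans_def by blast
lemma lin_antisym: "linear_order r \<Longrightarrow> (x,y) \<in> r \<Longrightarrow> (y,x) \<in> r \<Longrightarrow> x = y"
  unfolding linear_order_on_def partial_order_on_def antisym_def by blast
lemma lin_total: "linear_order r \<Longrightarrow> x \<noteq> y \<Longrightarrow> (x,y) \<in> r \<or> (y,x) \<in> r"
  unfolding linear_order_on_def total_on_def by blast

lemma finite_min: assumes "finite A" "A \<noteq> {}" "linear_order r"
  shows "\<exists>a\<in>A. \<forall>b\<in>A. (a,b) \<in> r"
  using assms(1,2)
proof (induction A rule: finite_ne_induct)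
  case (singleton x) then show ?case using lin_refl[OF assms(3)] by auto
next
  case (insert x F)
  then obtain a where a: "a \<in> F" "\<forall>b\<in>F. (a,b) \<in> r" by auto
  show ?case
  proof (cases "(a,x) \<in> r")
    case True then show ?thesis using a by auto
  next
    case False
    then have "(x,a) \<in> r" using lin_total[OF assms(3), of a x] lin_refl[OF assms(3)] by auto
    then show ?thesis using a lin_refl[OF assms(3)] lin_trans[OF assms(3)] by blast
  qed
qed

lemma the_min: assumes "linear_order r" "a \<in> A" "\<forall>b\<in>A. (a,b) \<in> r"
  shows "(THE x. x \<in> A \<and> (\<forall>y\<in>A. (x,y) \<in> r)) = a"
  apply (rule the_equality)
  using assms lin_antisym[OF assms(1)] by auto

lemma prun_sub:
  assumes "\<forall>h. linear_order (ord h)" "finite I"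
  shows "fst ` set (prun ord dec I n) \<subseteq> I"
proof (induction n)
  case 0 then show ?case by simp
next
  case (Suc n)
  define h where "h = prun ord dec I n"
  define R where "R = I - fst ` set h"
  define a where "a = (THE x. x \<in> R \<and> (\<forall>y\<in>R. (x,y) \<in> ord h))"
  have eq: "prun ord dec I (Suc n) = (if R = {} then h else h @ [(a, dec h a)])"
    unfolding h_def R_def a_def by (simp only: prun.simps Let_def)
  show ?case
  proof (cases "R = {}")
    case True then show ?thesis using Suc eq h_def by simp
  next
    case False
    have "finite R" using assms(2) R_def by simp
    then obtain a' where a': "a' \<in> R" "\<forall>b\<in>R. (a',b) \<in> ord h" using finite_min[OF _ False] assms(1) by blast
    have "a = a'" unfolding a_def using the_min[of "ord h" a' R] assms(1) a' by simp
    then have "a \<in> I" using a'(1) R_def by simp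
    then show ?thesis using Suc eq False h_def by simp
  qed
qed

lemma prun_mono: "set (prun ord dec I n) \<subseteq> set (prun ord dec I (n + k))"
  by (induction k) (auto simp: Let_def)

lemma prun_one:
  assumes "linear_order (ord [])" "x \<in> I" "\<forall>y\<in>I. (x,y) \<in> ord []"
  shows "prun ord dec I 1 = [(x, dec [] x)]"
proof -
  have t: "(THE z. z \<in> I \<and> (\<forall>y\<in>I. (z,y) \<in> ord [])) = x" using the_min[of "ord []" x I] assms by simp
  have "I \<noteq> {}" using assms(2) by blast
  then show ?thesis using t by (simp only: One_nat_def prun.simps Let_def list.set set_empty image_empty Diff_empty if_False append_Nil)
qed

lemma pout_first:
  assumes "linear_order (ord [])" "x \<in> I" "\<forall>y\<in>I. (x,y) \<in> ord []" "finite I" "dec [] x"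
  shows "x \<in> pout ord dec I"
proof -
  have "card I \<ge> 1" using assms(2,4) by (metis One_nat_def Suc_leI card_gt_0_iff empty_iff)
  then have "set (prun ord dec I 1) \<subseteq> set (prun ord dec I (card I))"
    using prun_mono[of ord dec I 1 "card I - 1"] by simp
  then show ?thesis using prun_one[of ord x I dec, OF assms(1-3)] assms(5) unfolding pout_def by auto
qed

lemma pout_sub:
  assumes "\<forall>h. linear_order (ord h)" "finite I"
  shows "pout ord dec I \<subseteq> I"
  using prun_sub[OF assms] unfolding pout_def by force

lemma alloc_eq: assumes "feasible X" "(i,S,w) \<in> X" shows "alloc X i = S"
proof -
  have "(THE S'. \<exists>w. (i,S',w) \<in> X) = S"
    apply (rule the_equality)
    using assms unfolding feasible_def by fastforce+
  then show ?thesis using assms(2) unfolding alloc_def by auto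
qed

lemma feas_D: assumes "feasible X" "(a,S,u) \<in> X" "(a',S',u') \<in> X" "(a,S,u) \<noteq> (a',S',u')"
  shows "S \<inter> S' = {}"
  using assms unfolding feasible_def by fast

lemma bids_mem: "(i,S,w) \<in> bids C v \<longleftrightarrow> S \<in> C i \<and> w = v i S"
  unfolding bids_def by auto

lemma bids_finite: assumes "inst_ok m C v" shows "finite (bids C v)"
proof -
  have "bids C v = (\<lambda>(i,S). (i,S,v i S)) ` (SIGMA i:{i. C i \<noteq> {}}. C i)"
    unfolding bids_def by auto
  moreover have "finite (SIGMA i:{i. C i \<noteq> {}}. C i)"
  proof (rule finite_SigmaI)
    show "finite {i. C i \<noteq> {}}" using assms unfolding inst_ok_def by auto
    fix i have "C i \<subseteq> Pow {0..<m}" using assms unfolding inst_ok_def by auto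
    then show "finite (C i)" by (meson finite_Pow_iff finite_atLeastLessThan finite_subset)
  qed
  ultimately show ?thesis by simp
qed

lemma opt_ge: assumes "finite (bids C v)" "X \<subseteq> bids C v" "feasible X"
  shows "welfare X \<le> OPT C v"
proof -
  have "finite {X. X \<subseteq> bids C v \<and> feasible X}" using assms(1) by simp
  then show ?thesis unfolding OPT_def using assms by (intro Max_ge) auto
qed

theorem theorem14:
  fixes m d :: nat and \<delta> :: real
    and ord :: "hist \<Rightarrow> ebid rel" and dec :: "hist \<Rightarrow> ebid \<Rightarrow> bool"
  assumes "2 \<le> d" and "d \<le> m" and "\<delta> > 0"
    and "priority_mech m ord dec"
    and "truthful_verif m ord dec"
  shows "\<exists>C v. inst_ok m C v \<and> (\<forall>i. \<forall>S\<in>C i. card S \<le> d) \<and>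
           (1 - \<delta>) * real d * welfare (pout ord dec (bids C v)) < OPT C v"
proof (rule ccontr)
  assume NC0: "\<not> ?thesis"
  have NC: "\<not> (1 - \<delta>) * real d * welfare (pout ord dec (bids C v)) < OPT C v"
    if "inst_ok m C v" "\<forall>i. \<forall>S\<in>C i. card S \<le> d" for C v
    using NC0 that by blast
  have lin: "\<forall>h. linear_order (ord h)" using assms(4) unfolding priority_mech_def by auto
  have feas: "\<And>C v. inst_ok m C v \<Longrightarrow> feasible (pout ord dec (bids C v))"
    using assms(4) unfolding priority_mech_def by auto
  define Od where "Od = ord []"
  have linO: "linear_order Od" using lin Od_def by simp
  define T where "T = {0..<d}"
  have cardT: "card T = d" and T_ne: "T \<noteq> {}" and T_sub: "T \<subseteq> {0..<m}"
    using assms(1,2) by (auto simp: T_def)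
  define w :: real where "w = (if \<delta> < 1 then 1 - \<delta>/2 else 1/2)"
  have w0: "0 < w" and w1: "w < 1" and wd: "1 - \<delta> < w" using assms(3) by (auto simp: w_def)
  have single: "dec [] (j,S,x)" if "S \<noteq> {}" "S \<subseteq> {0..<m}" "card S \<le> d" "x > 0" for j S x
  proof (rule ccontr)
    assume nd: "\<not> dec [] (j,S,x)"
    define C where "C = (\<lambda>i. if i = j then {S} else ({} :: nat set set))"
    define v where "v = (\<lambda>(i::nat) (S::nat set). x)"
    have ok: "inst_ok m C v" using that unfolding inst_ok_def C_def v_def by auto
    have B: "bids C v = {(j,S,x)}" unfolding bids_def C_def v_def by auto
    have "prun ord dec {(j,S,x)} 1 = [((j,S,x), dec [] (j,S,x))]"
      using prun_one[of ord "(j,S,x)" "{(j,S,x)}" dec] linO Od_def lin_refl[OF linO] by auto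
    then have P: "pout ord dec (bids C v) = {}" unfolding B pout_def using nd by auto
    have "welfare {(j,S,x)} \<le> OPT C v"
      by (rule opt_ge) (use B in \<open>auto simp: feasible_def\<close>)
    then have "0 < OPT C v" using that by (simp add: welfare_def)
    moreover have "\<forall>i. \<forall>S\<in>C i. card S \<le> d" using that by (simp add: C_def)
    ultimately show False using NC[OF ok] P by (simp add: welfare_def)
  qed
  define x where "x = (\<lambda>n::nat. (n, T, 1::real))"
  obtain xi where xi: "xi \<in> x ` {..d}" "\<forall>b\<in>x ` {..d}. (xi, b) \<in> Od"
    using finite_min[of "x ` {..d}" Od] linO by blast
  then obtain i where i: "i \<le> d" "xi = x i" by auto
  have imin: "\<And>n. n \<le> d \<Longrightarrow> (x i, x n) \<in> Od" using xi i by auto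
  define kk where "kk = (\<lambda>n::nat. if n < i then n else n - 1)"
  have kkd: "\<And>n. n \<le> d \<Longrightarrow> n \<noteq> i \<Longrightarrow> kk n < d" using i unfolding kk_def by auto
  have kkm: "\<And>n. n \<le> d \<Longrightarrow> n \<noteq> i \<Longrightarrow> kk n < m" using kkd assms(2) by (meson less_le_trans)
  define s where "s = (\<lambda>n. (n, {kk n}, w))"
  have kT: "\<And>n. n \<le> d \<Longrightarrow> n \<noteq> i \<Longrightarrow> {kk n} \<noteq> T" 
  proof
    fix n assume "{kk n} = T"
    then have "card {kk n} = card T" by (rule arg_cong)
    then have "card T = 1" by simp
    then show False using cardT assms(1) by simp
  qed
  show False
  proof (cases "\<forall>n\<le>d. n \<noteq> i \<longrightarrow> (x i, s n) \<in> Od")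
    case True
    define C where "C = (\<lambda>n. if n = i then {T} else if n \<le> d then {{kk n}} else ({} :: nat set set))"
    define v where "v = (\<lambda>(n::nat) S. if S = T then 1 else w)"
    have f1: "finite {i. C i \<noteq> {}}" by (rule finite_subset[of _ "{..d}"]) (use i in \<open>auto simp: C_def\<close>)
    have f2: "S \<noteq> {} \<and> S \<subseteq> {0..<m} \<and> 0 \<le> v n S" if "S \<in> C n" for n S
      using that T_ne T_sub kkm w0 by (auto simp: C_def v_def split: if_splits)
    have ok: "inst_ok m C v" unfolding inst_ok_def using f1 f2 by blast
    have cd: "\<forall>n. \<forall>S\<in>C n. card S \<le> d" using cardT assms(1) by (auto simp: C_def)
    have Bm: "y \<in> bids C v \<longleftrightarrow> y = x i \<or> (\<exists>n\<le>d. n \<noteq> i \<and> y = s n)" for y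
      using kT by (cases y) (auto simp: bids_def C_def v_def x_def s_def)
    have fin: "finite (bids C v)" using bids_finite[OF ok] .
    have xin: "x i \<in> pout ord dec (bids C v)"
    proof (rule pout_first)
      show "linear_order (ord [])" using linO Od_def by simp
      show "x i \<in> bids C v" using Bm by simp
      show "\<forall>y\<in>bids C v. (x i, y) \<in> ord []"
      proof
        fix y assume "y \<in> bids C v"
        then have "y = x i \<or> (\<exists>n\<le>d. n \<noteq> i \<and> y = s n)" using Bm by blast
        then show "(x i, y) \<in> ord []" using True lin_refl[OF linO, of "x i"] Od_def by auto
      qed
      show "finite (bids C v)" by fact
      show "dec [] (x i)" unfolding x_def using single T_ne T_sub cardT by simp
    qed
    have P: "pout ord dec (bids C v) = {x i}"
    proof -
      have "y = x i" if y: "y \<in> pout ord dec (bids C v)" for y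
      proof -
        have "y \<in> bids C v" using y pout_sub[OF lin fin] by auto
        then consider "y = x i" | n where "n \<le> d" "n \<noteq> i" "y = s n" using Bm by blast
        then show ?thesis
        proof cases
          case (2 n)
          then have "x i \<noteq> s n" "T \<inter> {kk n} \<noteq> {}" using kkd by (auto simp: x_def s_def T_def)
          moreover have "T \<inter> {kk n} = {}"
            using feas_D[OF feas[OF ok], of i T 1 n "{kk n}" w] y xin 2 \<open>x i \<noteq> s n\<close> by (simp add: x_def s_def)
          ultimately show ?thesis by simp
        qed
      qed
      then show ?thesis using xin by blast
    qed
    have injs: "inj_on s ({..d} - {i})" unfolding inj_on_def s_def by auto
    have kinj: "\<And>a b. a \<le> d \<Longrightarrow> b \<le> d \<Longrightarrow> a \<noteq> i \<Longrightarrow> b \<noteq> i \<Longrightarrow> kk a = kk b \<Longrightarrow> a = b"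
      unfolding kk_def by (auto split: if_splits)
    have fX: "feasible (s ` ({..d} - {i}))"
      unfolding feasible_def s_def using kinj by auto
    have "welfare (s ` ({..d} - {i})) = (\<Sum>n\<in>{..d} - {i}. w)"
      unfolding welfare_def by (subst sum.reindex[OF injs]) (simp add: s_def)
    also have "\<dots> = real d * w" using i by (simp add: card_Diff_singleton)
    finally have "welfare (s ` ({..d} - {i})) = real d * w" .
    moreover have "s ` ({..d} - {i}) \<subseteq> bids C v" using Bm by blast
    ultimately have "real d * w \<le> OPT C v"
      using opt_ge[OF fin _ fX] by simp
    moreover have "(1 - \<delta>) * real d < real d * w" using wd assms(1) by simp
    ultimately show False using NC[OF ok cd] P by (simp add: welfare_def x_def)
  next
    case False
    then obtain n where n: "n \<le> d" "n \<noteq> i" "(x i, s n) \<notin> Od" by auto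
    have "(s n, x i) \<in> Od" using lin_total[OF linO, of "x i" "s n"] n by (auto simp: x_def s_def)
    then have sx: "(s n, x n) \<in> Od" using imin[OF n(1)] lin_trans[OF linO] by blast
    define k where "k = kk n"
    have kT': "{k} \<noteq> T" using kT n k_def by auto
    have kd: "k < d" using kkd n k_def by auto
    define C where "C = (\<lambda>j. if j = n then {{k}, T} else ({} :: nat set set))"
    define b where "b = (\<lambda>(j::nat) S. if S = T then (1::real) else 0)"
    define t where "t = (\<lambda>S. if S = T then (1::real) else w)"
    have ok1: "inst_ok m C b" using T_ne T_sub kd assms(2) unfolding inst_ok_def C_def b_def by auto
    have ok2: "inst_ok m C (b(n := t))" using T_ne T_sub kd assms(2) w0 unfolding inst_ok_def C_def b_def t_def by auto
    have cd: "\<forall>j. \<forall>S\<in>C j. card S \<le> d" using cardT assms(1) by (auto simp: C_def)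
    have BL: "bids C b = {(n,{k},0), (n,T,1)}" using kT' unfolding bids_def C_def b_def by auto
    have BP: "bids C (b(n := t)) = {s n, x n}" using kT' unfolding bids_def C_def b_def t_def s_def x_def k_def by auto
    have sin: "s n \<in> pout ord dec (bids C (b(n := t)))"
    proof (rule pout_first)
      show "linear_order (ord [])" using linO Od_def by simp
      show "s n \<in> bids C (b(n := t))" using BP by simp
      show "\<forall>y\<in>bids C (b(n := t)). (s n, y) \<in> ord []" using BP sx lin_refl[OF linO] Od_def by auto
      show "finite (bids C (b(n := t)))" using BP by simp
      show "dec [] (s n)" unfolding s_def using single[where j=n and S="{kk n}" and x=w] kd k_def w0 assms(1,2) by auto
    qed
    have At: "alloc (pout ord dec (bids C (b(n := t)))) n = {k}"
      using alloc_eq[OF feas[OF ok2]] sin by (auto simp: s_def k_def)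
    have tr: "val (b n) (alloc (pout ord dec (bids C b)) n) \<le> val t (alloc (pout ord dec (bids C b)) n)
      \<longrightarrow> val t (alloc (pout ord dec (bids C b)) n) \<le> val t {k}"
    proof -
      have H: "\<forall>C b i t. inst_ok m C b \<longrightarrow> inst_ok m C (b(i := t)) \<longrightarrow>
        (val (b i) (alloc (pout ord dec (bids C b)) i) \<le> val t (alloc (pout ord dec (bids C b)) i) \<longrightarrow>
         val t (alloc (pout ord dec (bids C b)) i) \<le> val t (alloc (pout ord dec (bids C (b(i := t)))) i))"
        using assms(5) unfolding truthful_verif_def Let_def by simp
      show ?thesis using H[rule_format, OF ok1 ok2] At by simp
    qed
    have notT: "(n,T,1) \<notin> pout ord dec (bids C b)"
    proof
      assume "(n,T,1) \<in> pout ord dec (bids C b)"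
      then have "alloc (pout ord dec (bids C b)) n = T" using alloc_eq[OF feas[OF ok1]] by auto
      then show False using tr T_ne kT' w1 by (auto simp: val_def b_def t_def)
    qed
    have "pout ord dec (bids C b) \<subseteq> {(n,{k},0)}"
      using pout_sub[OF lin, of "bids C b" dec] BL notT by auto
    then have W: "welfare (pout ord dec (bids C b)) = 0"
      unfolding welfare_def by (auto simp: subset_singleton_iff)
    have "welfare {(n,T,1)} \<le> OPT C b"
      by (rule opt_ge) (use BL in \<open>auto simp: feasible_def\<close>)
    then have "1 \<le> OPT C b" by (simp add: welfare_def)
    then show False using NC[OF ok1 cd] W by simp
  qed
qed

end
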